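(* Let $X$ be a topological space satisfying the $T_{3\frac12}$ separation axiom. The following assertions are equivalent: (a) $X$ is CCC; (b) $X$ satisfies CCC for cozero sets; (c) $C(X)$ has the countable sup property. Moreover, if $C_b(X)$ admits a strictly positive linear functional, then (a), (b) and (c) hold.
   Context: $X$ satisfies $T_{3\frac12}$ if it is Hausdorff and for every closed $F\subseteq X$ and $x\notin F$ there is a continuous $f\colon X\to\mathbb R$ with $f(x)=1$ and $f\equiv0$ on $F$. $X$ is CCC if every family of pairwise disjoint open subsets of $X$ is countable. A cozero set is a set $\{x: f(x)\neq0\}$ with $f\in C(X)$; $X$ satisfies CCC for cozero sets if every collection of pairwise disjoint cozero sets is countable. $C(X)$ (resp. $C_b(X)$) is the vector lattice of real-valued continuous (resp. bounded continuous) functions with the pointwise order. A vector lattice has the countable sup property if every nonempty subset possessing a supremum contains a countable subset with the same supremum. A positive functional $\varphi$ is strictly positive if $f\ge0$, $\varphi(f)=0$ imply $f=0$. *)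

theory Defs
  imports "HOL-Analysis.Analysis"
begin

definition tychonoff_space :: "'a topology \<Rightarrow> bool" where
  "tychonoff_space X \<longleftrightarrow> Hausdorff_space X \<and> completely_regular_space X"

definition ccc_space :: "'a topology \<Rightarrow> bool" where
  "ccc_space X \<longleftrightarrow>
     (\<forall>\<U>. (\<forall>U\<in>\<U>. openin X U) \<and> pairwise disjnt \<U> \<longrightarrow> countable \<U>)"

definition cozero_set :: "'a topology \<Rightarrow> ('a \<Rightarrow> real) \<Rightarrow> 'a set" where
  "cozero_set X f = {x \<in> topspace X. f x \<noteq> 0}"

definition is_cozero_set :: "'a topology \<Rightarrow> 'a set \<Rightarrow> bool" where
  "is_cozero_set X U \<longleftrightarrow> (\<exists>f. continuous_map X euclideanreal f \<and> U = cozero_set X f)"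

definition ccc_cozero :: "'a topology \<Rightarrow> bool" where
  "ccc_cozero X \<longleftrightarrow>
     (\<forall>\<U>. (\<forall>U\<in>\<U>. is_cozero_set X U) \<and> pairwise disjnt \<U> \<longrightarrow> countable \<U>)"

text \<open>C(X): continuous real functions on X, represented extensionally
  (value 0 outside the topspace), with pointwise order on the topspace.\<close>
definition CX :: "'a topology \<Rightarrow> ('a \<Rightarrow> real) set" where
  "CX X = {f. continuous_map X euclideanreal f \<and> (\<forall>x. x \<notin> topspace X \<longrightarrow> f x = 0)}"

definition CbX :: "'a topology \<Rightarrow> ('a \<Rightarrow> real) set" where
  "CbX X = {f \<in> CX X. \<exists>B. \<forall>x\<in>topspace X. \<bar>f x\<bar> \<le> B}"

definition pw_le :: "'a topology \<Rightarrow> ('a \<Rightarrow> real) \<Rightarrow> ('a \<Rightarrow> real) \<Rightarrow> bool" where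
  "pw_le X f g \<longleftrightarrow> (\<forall>x\<in>topspace X. f x \<le> g x)"

definition is_sup_CX :: "'a topology \<Rightarrow> ('a \<Rightarrow> real) set \<Rightarrow> ('a \<Rightarrow> real) \<Rightarrow> bool" where
  "is_sup_CX X S s \<longleftrightarrow> s \<in> CX X \<and> (\<forall>f\<in>S. pw_le X f s) \<and>
     (\<forall>g\<in>CX X. (\<forall>f\<in>S. pw_le X f g) \<longrightarrow> pw_le X s g)"

definition countable_sup_property_CX :: "'a topology \<Rightarrow> bool" where
  "countable_sup_property_CX X \<longleftrightarrow>
     (\<forall>S s. S \<subseteq> CX X \<and> S \<noteq> {} \<and> is_sup_CX X S s \<longrightarrow>
        (\<exists>T\<subseteq>S. countable T \<and> is_sup_CX X T s))"

definition strictly_positive_functional_Cb :: "'a topology \<Rightarrow> (('a \<Rightarrow> real) \<Rightarrow> real) \<Rightarrow> bool" where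
  "strictly_positive_functional_Cb X \<phi> \<longleftrightarrow>
     (\<forall>f\<in>CbX X. \<forall>g\<in>CbX X. \<forall>a b. \<phi> (\<lambda>x. a * f x + b * g x) = a * \<phi> f + b * \<phi> g) \<and>
     (\<forall>f\<in>CbX X. pw_le X (\<lambda>_. 0) f \<longrightarrow> \<phi> f \<ge> 0) \<and>
     (\<forall>f\<in>CbX X. pw_le X (\<lambda>_. 0) f \<and> \<phi> f = 0 \<longrightarrow> (\<forall>x\<in>topspace X. f x = 0))"

end

theory Submission
  imports Defs
begin


lemma openin_lt:
  assumes "continuous_map X euclideanreal p" "continuous_map X euclideanreal q"
  shows "openin X {x\<in>topspace X. p x < q x}"
proof -
  have "openin X {x \<in> topspace X. (\<lambda>x. q x - p x) x \<in> {0<..}}"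
    by (rule openin_continuous_map_preimage[where Y=euclideanreal]) (simp_all add: continuous_map_diff assms)
  then show ?thesis by simp
qed

lemma CX_restrict:
  assumes "continuous_map X euclideanreal f"
  shows "(\<lambda>x. if x \<in> topspace X then f x else 0) \<in> CX X"
proof -
  have "continuous_map X euclideanreal (\<lambda>x. if x \<in> topspace X then f x else 0)"
    by (rule continuous_map_eq[OF assms]) simp
  then show ?thesis unfolding CX_def by simp
qed

lemma CX_cont: "f \<in> CX X \<Longrightarrow> continuous_map X euclideanreal f"
  by (simp add: CX_def)

lemma CX_out: "f \<in> CX X \<Longrightarrow> x \<notin> topspace X \<Longrightarrow> f x = 0"
  by (simp add: CX_def)

lemma urysohn_CX:
  assumes "completely_regular_space X" "openin X U" "x \<in> U"
  shows "\<exists>h\<in>CX X. (\<forall>y\<in>topspace X. 0 \<le> h y \<and> h y \<le> 1) \<and> h x = 1 \<and> (\<forall>y. y \<notin> U \<longrightarrow> h y = 0)"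
proof -
  obtain f where f: "continuous_map X euclideanreal f" "f x = 0" "f ` (topspace X - U) \<subseteq> {1}"
    using assms(1)[unfolded completely_regular_space_alt', rule_format, OF assms(2,3)] by blast
  have xt: "x \<in> topspace X" using assms openin_subset by blast
  define h where "h = (\<lambda>y. if y \<in> topspace X then max 0 (min 1 (1 - f y)) else 0)"
  have "continuous_map X euclideanreal (\<lambda>y. max 0 (min 1 (1 - f y)))"
    by (intro continuous_intros f(1)) auto
  then have "h \<in> CX X" unfolding h_def by (rule CX_restrict)
  moreover have "\<forall>y. y \<notin> U \<longrightarrow> h y = 0"
    using f(3) unfolding h_def by force
  ultimately show ?thesis using xt f(2) by (intro bexI[of _ h]) (auto simp: h_def)
qed

lemma cozero_open:
  assumes "is_cozero_set X Z" shows "openin X Z"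
proof -
  obtain f where f: "continuous_map X euclideanreal f" "Z = cozero_set X f"
    using assms unfolding is_cozero_set_def by blast
  have "openin X {x \<in> topspace X. f x \<in> -{0}}"
    by (rule openin_continuous_map_preimage[OF f(1)]) (simp add: open_Compl)
  then show ?thesis using f(2) by (simp add: cozero_set_def)
qed

lemma cozero_sub: "is_cozero_set X Z \<Longrightarrow> Z \<subseteq> topspace X"
  by (metis cozero_open openin_subset)

lemma ccc_imp_cozero: "ccc_space X \<Longrightarrow> ccc_cozero X"
  unfolding ccc_space_def ccc_cozero_def by (meson cozero_open)

lemma cozero_imp_ccc:
  assumes cr: "completely_regular_space X" and c: "ccc_cozero X"
  shows "ccc_space X"
  unfolding ccc_space_def
proof (intro allI impI)
  fix \<U> assume H: "(\<forall>U\<in>\<U>. openin X U) \<and> pairwise disjnt \<U>"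
  define \<U>' where "\<U>' = \<U> - {{}}"
  have "\<forall>U\<in>\<U>'. \<exists>Z. is_cozero_set X Z \<and> Z \<noteq> {} \<and> Z \<subseteq> U"
  proof
    fix U assume U: "U \<in> \<U>'"
    then obtain x where x: "x \<in> U" using \<U>'_def by blast
    obtain h where h: "h\<in>CX X" "h x = 1" "\<forall>y. y \<notin> U \<longrightarrow> h y = 0"
      using urysohn_CX[OF cr, of U x] H U x \<U>'_def by blast
    have "x \<in> topspace X" using H U x \<U>'_def openin_subset by blast
    then show "\<exists>Z. is_cozero_set X Z \<and> Z \<noteq> {} \<and> Z \<subseteq> U"
      using h unfolding is_cozero_set_def cozero_set_def CX_def
      by (intro exI[of _ "cozero_set X h"]) (auto simp: cozero_set_def)
  qed
  then obtain Z where Z: "\<And>U. U\<in>\<U>' \<Longrightarrow> is_cozero_set X (Z U) \<and> Z U \<noteq> {} \<and> Z U \<subseteq> U"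
    by metis
  have inj: "inj_on Z \<U>'"
  proof (rule inj_onI)
    fix U V assume UV: "U \<in> \<U>'" "V \<in> \<U>'" "Z U = Z V"
    show "U = V"
    proof (rule ccontr)
      assume "U \<noteq> V"
      then have "disjnt U V" using H UV \<U>'_def by (auto simp: pairwise_def)
      then show False using Z[OF UV(1)] Z[OF UV(2)] UV(3) by (auto simp: disjnt_def)
    qed
  qed
  have "pairwise disjnt (Z ` \<U>')"
    unfolding pairwise_def
  proof (clarify)
    fix U V assume UV: "U \<in> \<U>'" "V \<in> \<U>'" "Z U \<noteq> Z V"
    then have "U \<noteq> V" by auto
    then have "disjnt U V" using H UV \<U>'_def by (auto simp: pairwise_def)
    then show "disjnt (Z U) (Z V)" using Z[OF UV(1)] Z[OF UV(2)] by (auto simp: disjnt_def)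
  qed
  then have "countable (Z ` \<U>')" using c Z unfolding ccc_cozero_def by blast
  then have "countable \<U>'" using inj countable_image_inj_on by blast
  then have "countable (insert {} \<U>')" by simp
  moreover have "\<U> \<subseteq> insert {} \<U>'" using \<U>'_def by blast
  ultimately show "countable \<U>" using countable_subset by blast
qed



lemma CbX_lin:
  assumes f: "f \<in> CbX X" and g: "g \<in> CbX X"
  shows "(\<lambda>x. a * f x + b * g x) \<in> CbX X"
proof -
  obtain B1 where B1: "\<forall>x\<in>topspace X. \<bar>f x\<bar> \<le> B1" using f unfolding CbX_def by blast
  obtain B2 where B2: "\<forall>x\<in>topspace X. \<bar>g x\<bar> \<le> B2" using g unfolding CbX_def by blast
  have cf: "continuous_map X euclideanreal f" and cg: "continuous_map X euclideanreal g"
    using f g unfolding CbX_def CX_def by auto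
  have c: "continuous_map X euclideanreal (\<lambda>x. a * f x + b * g x)"
    by (intro continuous_map_add continuous_map_real_mult_left cf cg)
  have z: "\<forall>x. x \<notin> topspace X \<longrightarrow> a * f x + b * g x = 0"
    using f g unfolding CbX_def CX_def by auto
  have "\<forall>x\<in>topspace X. \<bar>a * f x + b * g x\<bar> \<le> \<bar>a\<bar> * B1 + \<bar>b\<bar> * B2"
  proof
    fix x assume x: "x \<in> topspace X"
    have "\<bar>a * f x + b * g x\<bar> \<le> \<bar>a\<bar> * \<bar>f x\<bar> + \<bar>b\<bar> * \<bar>g x\<bar>"
      by (metis abs_mult abs_triangle_ineq)
    also have "\<dots> \<le> \<bar>a\<bar> * B1 + \<bar>b\<bar> * B2"
      using B1 B2 x by (intro add_mono mult_left_mono) auto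
    finally show "\<bar>a * f x + b * g x\<bar> \<le> \<bar>a\<bar> * B1 + \<bar>b\<bar> * B2" .
  qed
  then show ?thesis using c z unfolding CbX_def CX_def by blast
qed

lemma zero_CbX: "(\<lambda>x. 0) \<in> CbX X"
  unfolding CbX_def CX_def by (intro CollectI conjI exI[of _ 0]) auto

lemma one_CbX: "(\<lambda>x. if x \<in> topspace X then 1 else 0) \<in> CbX X"
proof -
  have "(\<lambda>x. if x \<in> topspace X then 1 else 0) \<in> CX X"
    by (rule CX_restrict) simp
  then show ?thesis unfolding CbX_def by (intro CollectI conjI exI[of _ 1]) auto
qed

lemma functional_imp_ccc:
  assumes cr: "completely_regular_space X" and sp: "strictly_positive_functional_Cb X \<phi>"
  shows "ccc_space X"
  unfolding ccc_space_def
proof (intro allI impI)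
  fix \<U> assume H: "(\<forall>U\<in>\<U>. openin X U) \<and> pairwise disjnt \<U>"
  have lin: "\<And>f g a b. f \<in> CbX X \<Longrightarrow> g \<in> CbX X \<Longrightarrow> \<phi> (\<lambda>x. a * f x + b * g x) = a * \<phi> f + b * \<phi> g"
    using sp unfolding strictly_positive_functional_Cb_def by blast
  have pos: "\<And>f. f \<in> CbX X \<Longrightarrow> pw_le X (\<lambda>_. 0) f \<Longrightarrow> \<phi> f \<ge> 0"
    using sp unfolding strictly_positive_functional_Cb_def by blast
  have spos: "\<And>f x. f \<in> CbX X \<Longrightarrow> pw_le X (\<lambda>_. 0) f \<Longrightarrow> \<phi> f = 0 \<Longrightarrow> x \<in> topspace X \<Longrightarrow> f x = 0"
    using sp unfolding strictly_positive_functional_Cb_def by blast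
  define \<U>' where "\<U>' = \<U> - {{}}"
  have "\<forall>U\<in>\<U>'. \<exists>h\<in>CX X. (\<forall>y\<in>topspace X. 0 \<le> h y \<and> h y \<le> 1) \<and> (\<exists>x\<in>topspace X. h x = 1) \<and> (\<forall>y. y \<notin> U \<longrightarrow> h y = 0)"
  proof
    fix U assume U: "U \<in> \<U>'"
    then obtain x where x: "x \<in> U" using \<U>'_def by blast
    have xt: "x \<in> topspace X" using H U x \<U>'_def openin_subset by blast
    show "\<exists>h\<in>CX X. (\<forall>y\<in>topspace X. 0 \<le> h y \<and> h y \<le> 1) \<and> (\<exists>x\<in>topspace X. h x = 1) \<and> (\<forall>y. y \<notin> U \<longrightarrow> h y = 0)"
      using urysohn_CX[OF cr, of U x] H U x xt \<U>'_def by blast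
  qed
  then obtain h where h: "\<And>U. U\<in>\<U>' \<Longrightarrow> h U \<in> CX X \<and> (\<forall>y\<in>topspace X. 0 \<le> h U y \<and> h U y \<le> 1) \<and> (\<exists>x\<in>topspace X. h U x = 1) \<and> (\<forall>y. y \<notin> U \<longrightarrow> h U y = 0)"
    by metis
  have hb: "h U \<in> CbX X" if "U \<in> \<U>'" for U
    using h[OF that] unfolding CbX_def by (intro CollectI conjI exI[of _ 1]) auto
  have hpw: "pw_le X (\<lambda>_. 0) (h U)" if "U \<in> \<U>'" for U
    using h[OF that] unfolding pw_le_def by auto
  have cpos: "\<phi> (h U) > 0" if U: "U \<in> \<U>'" for U
  proof -
    have "\<phi> (h U) \<ge> 0" using pos hb hpw U by blast
    moreover have "\<phi> (h U) \<noteq> 0"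
    proof
      assume "\<phi> (h U) = 0"
      then have "\<forall>x\<in>topspace X. h U x = 0" using spos hb hpw U by blast
      then show False using h[OF U] by fastforce
    qed
    ultimately show ?thesis by linarith
  qed
  define e where "e = (\<lambda>x::'a. if x \<in> topspace X then 1 else (0::real))"
  have eb: "e \<in> CbX X" unfolding e_def by (rule one_CbX)
  have phi0: "\<phi> (\<lambda>x. 0) = 0"
    using lin[OF zero_CbX zero_CbX, of 0 0] by simp
  have sumb: "(\<lambda>x. \<Sum>U\<in>F. h U x) \<in> CbX X \<and> \<phi> (\<lambda>x. \<Sum>U\<in>F. h U x) = (\<Sum>U\<in>F. \<phi> (h U))"
    if "finite F" "F \<subseteq> \<U>'" for F
    using that
  proof (induction F rule: finite_induct)
    case empty
    then show ?case using zero_CbX phi0 by simp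
  next
    case (insert U F)
    have eq: "(\<lambda>x. \<Sum>V\<in>insert U F. h V x) = (\<lambda>x. 1 * h U x + 1 * (\<Sum>V\<in>F. h V x))"
      using insert.hyps by simp
    have hU: "h U \<in> CbX X" using hb insert.prems by blast
    have IH: "(\<lambda>x. \<Sum>U\<in>F. h U x) \<in> CbX X \<and> \<phi> (\<lambda>x. \<Sum>U\<in>F. h U x) = (\<Sum>U\<in>F. \<phi> (h U))"
      using insert.IH insert.prems by blast
    have m: "(\<lambda>x. 1 * h U x + 1 * (\<Sum>V\<in>F. h V x)) \<in> CbX X"
      by (rule CbX_lin[OF hU conjunct1[OF IH]])
    have p: "\<phi> (\<lambda>x. 1 * h U x + 1 * (\<Sum>V\<in>F. h V x)) = 1 * \<phi> (h U) + 1 * \<phi> (\<lambda>x. \<Sum>V\<in>F. h V x)"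
      by (rule lin[OF hU conjunct1[OF IH]])
    have s: "(\<Sum>V\<in>insert U F. \<phi> (h V)) = \<phi> (h U) + (\<Sum>V\<in>F. \<phi> (h V))"
      using insert.hyps(1,2) by (rule sum.insert)
    show ?case unfolding eq s using m p conjunct2[OF IH] by simp
  qed
  have sumle: "(\<Sum>U\<in>F. h U x) \<le> 1" if F: "finite F" "F \<subseteq> \<U>'" and x: "x \<in> topspace X" for F x
  proof (cases "\<exists>U0\<in>F. x \<in> U0")
    case True
    then obtain U0 where U0: "U0 \<in> F" "x \<in> U0" by blast
    have "(\<Sum>U\<in>F. h U x) = h U0 x + (\<Sum>U\<in>F - {U0}. h U x)"
      by (rule sum.remove[OF F(1) U0(1)])
    also have "(\<Sum>U\<in>F - {U0}. h U x) = 0"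
    proof (rule sum.neutral, rule ballI)
      fix V assume V: "V \<in> F - {U0}"
      then have "V \<in> \<U>" "U0 \<in> \<U>" "V \<noteq> U0" using F(2) U0(1) \<U>'_def by auto
      then have "disjnt U0 V" using H unfolding pairwise_def by metis
      then have "x \<notin> V" using U0(2) by (auto simp: disjnt_def)
      then show "h V x = 0" using h[of V] V F(2) by blast
    qed
    moreover have "h U0 x \<le> 1" using h[of U0] U0(1) F(2) x by blast
    ultimately show ?thesis by simp
  next
    case False
    then have "\<forall>U\<in>F. h U x = 0" using h F(2) by (meson subsetD)
    then show ?thesis by simp
  qed
  have bound: "(\<Sum>U\<in>F. \<phi> (h U)) \<le> \<phi> e" if F: "finite F" "F \<subseteq> \<U>'" for F
  proof -
    have s: "(\<lambda>x. \<Sum>U\<in>F. h U x) \<in> CbX X" using sumb[OF F] by blast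
    have "pw_le X (\<lambda>_. 0) (\<lambda>x. 1 * e x + (-1) * (\<Sum>U\<in>F. h U x))"
      unfolding pw_le_def e_def using sumle[OF F] by auto
    then have "\<phi> (\<lambda>x. 1 * e x + (-1) * (\<Sum>U\<in>F. h U x)) \<ge> 0"
      using pos CbX_lin[OF eb s] by blast
    then show ?thesis using lin[OF eb s, of 1 "-1"] sumb[OF F] by simp
  qed
  have "(\<lambda>U. \<phi> (h U)) summable_on \<U>'"
  proof (rule nonneg_bdd_above_summable_on)
    show "\<And>U. U \<in> \<U>' \<Longrightarrow> 0 \<le> \<phi> (h U)" using cpos less_imp_le by blast
    show "bdd_above (sum (\<lambda>U. \<phi> (h U)) ` {F. F \<subseteq> \<U>' \<and> finite F})"
      using bound by (intro bdd_aboveI[of _ "\<phi> e"]) auto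
  qed
  then have "countable {U\<in>\<U>'. \<phi> (h U) \<noteq> 0}" by (rule summable_countable_real)
  moreover have "{U\<in>\<U>'. \<phi> (h U) \<noteq> 0} = \<U>'" using cpos by force
  ultimately have "countable (insert {} \<U>')" by simp
  moreover have "\<U> \<subseteq> insert {} \<U>'" using \<U>'_def by blast
  ultimately show "countable \<U>" using countable_subset by blast
qed



lemma ccc_dense_subfamily:
  assumes c: "ccc_space X" and W: "\<forall>i\<in>I. openin X (W i)"
    and D: "\<forall>V. openin X V \<and> V \<noteq> {} \<longrightarrow> (\<exists>i\<in>I. V \<inter> W i \<noteq> {})"
  shows "\<exists>J\<subseteq>I. countable J \<and> (\<forall>V. openin X V \<and> V \<noteq> {} \<longrightarrow> (\<exists>i\<in>J. V \<inter> W i \<noteq> {}))"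
proof -
  define A where "A = {M. (\<forall>V\<in>M. openin X V \<and> V \<noteq> {} \<and> (\<exists>i\<in>I. V \<subseteq> W i)) \<and> pairwise disjnt M}"
  have "\<exists>M\<in>A. \<forall>N\<in>A. M \<subseteq> N \<longrightarrow> N = M"
  proof (rule Zorn_Lemma, rule ballI)
    fix C assume ch: "C \<in> chains A"
    then have CA: "C \<subseteq> A" and tot: "\<forall>M\<in>C. \<forall>N\<in>C. M \<subseteq> N \<or> N \<subseteq> M"
      unfolding chains_def chain_subset_def by blast+
    show "\<Union>C \<in> A" unfolding A_def
    proof (intro CollectI conjI)
      show "\<forall>V\<in>\<Union>C. openin X V \<and> V \<noteq> {} \<and> (\<exists>i\<in>I. V \<subseteq> W i)"
      proof
        fix V assume "V \<in> \<Union>C"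
        then obtain M where M: "M\<in>C" "V\<in>M" by blast
        then have "M \<in> A" using CA by blast
        then have "\<forall>V\<in>M. openin X V \<and> V \<noteq> {} \<and> (\<exists>i\<in>I. V \<subseteq> W i)"
          unfolding A_def by simp
        then show "openin X V \<and> V \<noteq> {} \<and> (\<exists>i\<in>I. V \<subseteq> W i)" using M(2) by blast
      qed
      show "pairwise disjnt (\<Union>C)" unfolding pairwise_def
      proof (intro ballI impI)
        fix V1 V2 assume V: "V1 \<in> \<Union>C" "V2 \<in> \<Union>C" "V1 \<noteq> V2"
        then obtain M1 M2 where M: "M1\<in>C" "V1\<in>M1" "M2\<in>C" "V2\<in>M2" by blast
        have "M1 \<subseteq> M2 \<or> M2 \<subseteq> M1" using tot M(1,3) by blast
        then have "\<exists>M\<in>C. V1 \<in> M \<and> V2 \<in> M" using M by blast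
        then obtain M where M: "M\<in>C" "V1\<in>M" "V2\<in>M" by blast
        then have "M \<in> A" using CA by blast
        then have "pairwise disjnt M" unfolding A_def by simp
        then show "disjnt V1 V2" using V(3) M(2,3) unfolding pairwise_def by blast
      qed
    qed
  qed
  then obtain M where MA: "M \<in> A" and Mmax: "\<forall>N\<in>A. M \<subseteq> N \<longrightarrow> N = M" by blast
  have Mp1: "\<forall>V\<in>M. openin X V \<and> V \<noteq> {} \<and> (\<exists>i\<in>I. V \<subseteq> W i)" and Mp2: "pairwise disjnt M"
    using MA unfolding A_def by simp_all
  have cM: "countable M" using c Mp1 Mp2 unfolding ccc_space_def by blast
  obtain \<iota> where \<iota>: "\<forall>V\<in>M. \<iota> V \<in> I \<and> V \<subseteq> W (\<iota> V)" using Mp1 by metis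
  show ?thesis
  proof (intro exI conjI)
    show "\<iota> ` M \<subseteq> I" using \<iota> by blast
    show "countable (\<iota> ` M)" using cM by simp
    show "\<forall>V. openin X V \<and> V \<noteq> {} \<longrightarrow> (\<exists>i\<in>\<iota> ` M. V \<inter> W i \<noteq> {})"
    proof (intro allI impI)
      fix V0 assume V0: "openin X V0 \<and> V0 \<noteq> {}"
      obtain i where i: "i \<in> I" "V0 \<inter> W i \<noteq> {}" using D V0 by blast
      define V1 where "V1 = V0 \<inter> W i"
      show "\<exists>i\<in>\<iota> ` M. V0 \<inter> W i \<noteq> {}"
      proof (cases "\<exists>V\<in>M. V1 \<inter> V \<noteq> {}")
        case True
        then obtain V where V: "V\<in>M" "V1 \<inter> V \<noteq> {}" by blast
        then have "V0 \<inter> W (\<iota> V) \<noteq> {}" using \<iota> V1_def by blast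
        then show ?thesis using V(1) by blast
      next
        case False
        have Wi: "openin X (W i)" using W i(1) by blast
        have o: "openin X V1" unfolding V1_def using V0 Wi by (simp add: openin_Int)
        have "insert V1 M \<in> A" unfolding A_def
        proof (intro CollectI conjI)
          show "\<forall>V\<in>insert V1 M. openin X V \<and> V \<noteq> {} \<and> (\<exists>i\<in>I. V \<subseteq> W i)"
          proof -
            have "V1 \<noteq> {}" using i(2) V1_def by simp
            moreover have "V1 \<subseteq> W i" using V1_def by blast
            ultimately show ?thesis using Mp1 o i(1) by auto
          qed
          have "\<forall>V\<in>M. V \<noteq> V1 \<longrightarrow> disjnt V1 V \<and> disjnt V V1"
            using False unfolding disjnt_def by blast
          then show "pairwise disjnt (insert V1 M)" by (simp add: pairwise_insert Mp2)
        qed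
        then have "insert V1 M = M" using Mmax by blast
        then have "V1 \<in> M" by blast
        then show ?thesis using False i(2) V1_def by blast
      qed
    qed
  qed
qed



lemma cm_const: "continuous_map X euclideanreal (\<lambda>x. c::real)"
  by simp

lemma ccc_imp_csp:
  assumes cr: "completely_regular_space X" and c: "ccc_space X"
  shows "countable_sup_property_CX X"
  unfolding countable_sup_property_CX_def
proof (intro allI impI)
  fix S s assume A: "S \<subseteq> CX X \<and> S \<noteq> {} \<and> is_sup_CX X S s"
  have sC: "s \<in> CX X" and ub: "\<forall>f\<in>S. pw_le X f s"
    and least: "\<forall>g\<in>CX X. (\<forall>f\<in>S. pw_le X f g) \<longrightarrow> pw_le X s g"
    using A unfolding is_sup_CX_def by blast+
  have cs: "continuous_map X euclideanreal s" using sC by (rule CX_cont)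
  define \<epsilon> where "\<epsilon> n = inverse (real (Suc n))" for n :: nat
  have epos: "\<epsilon> n > 0" for n unfolding \<epsilon>_def by simp
  define W where "W n f = {x\<in>topspace X. s x - \<epsilon> n < f x}" for n f
  have Wo: "openin X (W n f)" if "f \<in> S" for n f
  proof -
    have "continuous_map X euclideanreal (\<lambda>x. s x - \<epsilon> n)"
      by (rule continuous_map_diff[OF cs cm_const])
    moreover have "continuous_map X euclideanreal f" using that A CX_cont by blast
    ultimately show ?thesis unfolding W_def by (rule openin_lt)
  qed
  have D: "\<exists>f\<in>S. V \<inter> W n f \<noteq> {}" if V: "openin X V" "V \<noteq> {}" for n V
  proof (rule ccontr)
    assume N: "\<not> (\<exists>f\<in>S. V \<inter> W n f \<noteq> {})"
    obtain x0 where x0: "x0 \<in> V" using V by blast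
    have x0t: "x0 \<in> topspace X" using x0 V openin_subset by blast
    obtain u where u: "u\<in>CX X" "\<forall>y\<in>topspace X. 0 \<le> u y \<and> u y \<le> 1" "u x0 = 1" "\<forall>y. y \<notin> V \<longrightarrow> u y = 0"
      using urysohn_CX[OF cr V(1) x0] by blast
    define g where "g = (\<lambda>x. s x - \<epsilon> n * u x)"
    have "continuous_map X euclideanreal g" unfolding g_def
      by (rule continuous_map_diff[OF cs continuous_map_real_mult_left[OF CX_cont[OF u(1)]]])
    moreover have "\<forall>x. x \<notin> topspace X \<longrightarrow> g x = 0"
      unfolding g_def using CX_out[OF sC] CX_out[OF u(1)] by simp
    ultimately have gC: "g \<in> CX X" unfolding CX_def by blast
    have "pw_le X f g" if f: "f\<in>S" for f
      unfolding pw_le_def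
    proof
      fix x assume x: "x\<in>topspace X"
      have fs: "f x \<le> s x" using ub f x unfolding pw_le_def by blast
      show "f x \<le> g x"
      proof (cases "x\<in>V")
        case True
        then have "x \<notin> W n f" using N f by blast
        then have "f x \<le> s x - \<epsilon> n" using x unfolding W_def by simp
        moreover have "\<epsilon> n * u x \<le> \<epsilon> n"
          using u(2) x epos[of n] by (simp add: mult_left_le)
        ultimately show ?thesis unfolding g_def by linarith
      next
        case False
        then have "u x = 0" using u(4) by blast
        then show ?thesis using fs unfolding g_def by simp
      qed
    qed
    then have "pw_le X s g" using least gC by blast
    then have "s x0 \<le> g x0" using x0t unfolding pw_le_def by blast
    then show False using u(3) epos[of n] unfolding g_def by simp
  qed
  have "\<exists>J\<subseteq>S. countable J \<and> (\<forall>V. openin X V \<and> V \<noteq> {} \<longrightarrow> (\<exists>f\<in>J. V \<inter> W n f \<noteq> {}))" for n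
    by (rule ccc_dense_subfamily[OF c]) (use Wo D in blast)+
  then obtain T where T: "\<And>n. T n \<subseteq> S \<and> countable (T n) \<and> (\<forall>V. openin X V \<and> V \<noteq> {} \<longrightarrow> (\<exists>f\<in>T n. V \<inter> W n f \<noteq> {}))"
    by metis
  show "\<exists>T'\<subseteq>S. countable T' \<and> is_sup_CX X T' s"
  proof (intro exI conjI)
    show "(\<Union>n. T n) \<subseteq> S" using T by blast
    show "countable (\<Union>n. T n)" using T by (intro countable_UN) auto
    show "is_sup_CX X (\<Union>n. T n) s" unfolding is_sup_CX_def
    proof (intro conjI ballI impI)
      show "s \<in> CX X" by (rule sC)
      show "pw_le X f s" if "f \<in> (\<Union>n. T n)" for f using that T ub by blast
      fix g assume g: "g\<in>CX X" "\<forall>f\<in>(\<Union>n. T n). pw_le X f g"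
      show "pw_le X s g" unfolding pw_le_def
      proof (rule ballI, rule ccontr)
        fix x0 assume x0: "x0\<in>topspace X" "\<not> s x0 \<le> g x0"
        then have "0 < (s x0 - g x0) / 2" by simp
        then obtain n where n: "inverse (real (Suc n)) < (s x0 - g x0) / 2"
          using reals_Archimedean by blast
        define V where "V = {x\<in>topspace X. g x < s x - 2 * \<epsilon> n}"
        have "continuous_map X euclideanreal (\<lambda>x. s x - 2 * \<epsilon> n)"
          by (rule continuous_map_diff[OF cs cm_const])
        then have Vo: "openin X V" unfolding V_def by (rule openin_lt[OF CX_cont[OF g(1)]])
        have "x0 \<in> V" using x0 n unfolding V_def \<epsilon>_def by simp
        then obtain f where f: "f \<in> T n" "V \<inter> W n f \<noteq> {}" using T[of n] Vo by blast
        then obtain y where y: "y \<in> V" "y \<in> W n f" by blast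
        have yt: "y \<in> topspace X" using y(1) V_def by blast
        have "f y \<le> g y" using g(2) f(1) yt unfolding pw_le_def by blast
        then show False using y epos[of n] unfolding V_def W_def by simp
      qed
    qed
  qed
qed



lemma csp_imp_cozero:
  assumes cr: "completely_regular_space X" and csp: "countable_sup_property_CX X"
  shows "ccc_cozero X"
  unfolding ccc_cozero_def
proof (intro allI impI, rule ccontr)
  fix \<U> assume H: "(\<forall>U\<in>\<U>. is_cozero_set X U) \<and> pairwise disjnt \<U>" and nc: "\<not> countable \<U>"
  define W where "W = \<Union>\<U>"
  define e where "e = (\<lambda>x::'a. if x\<in>topspace X then 1 else (0::real))"
  have eC: "e \<in> CX X" unfolding e_def by (rule CX_restrict[OF cm_const])
  define S where "S = {u\<in>CX X. (\<forall>x\<in>topspace X. 0 \<le> u x \<and> u x \<le> 1) \<and>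
      ((\<exists>Z\<in>\<U>. \<forall>x\<in>topspace X - Z. u x = 0) \<or> (\<forall>x\<in>W. u x = 0))}"
  have SC: "S \<subseteq> CX X" unfolding S_def by blast
  have z0: "(\<lambda>x. 0::real) \<in> CX X" unfolding CX_def by (simp add: cm_const)
  have zS: "(\<lambda>x. 0) \<in> S" unfolding S_def using z0 by simp
  have sup: "is_sup_CX X S e" unfolding is_sup_CX_def
  proof (intro conjI ballI impI)
    show "e\<in>CX X" by (rule eC)
    show "pw_le X u e" if "u\<in>S" for u using that unfolding S_def pw_le_def e_def by auto
    fix g assume g: "g\<in>CX X" "\<forall>u\<in>S. pw_le X u g"
    show "pw_le X e g" unfolding pw_le_def
    proof (rule ballI, rule ccontr)
      fix x0 assume x0: "x0\<in>topspace X" "\<not> e x0 \<le> g x0"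
      then have gx0: "g x0 < 1" unfolding e_def by simp
      define V where "V = {x\<in>topspace X. g x < 1}"
      have Vo: "openin X V" unfolding V_def by (rule openin_lt[OF CX_cont[OF g(1)] cm_const])
      have x0V: "x0\<in>V" using x0 gx0 V_def by simp
      show False
      proof (cases "\<exists>Z\<in>\<U>. \<exists>y\<in>Z. y\<in>V")
        case True
        then obtain Z y where Z: "Z\<in>\<U>" "y\<in>Z" "y\<in>V" by blast
        obtain f where f: "continuous_map X euclideanreal f" "Z = cozero_set X f"
          using H Z(1) unfolding is_cozero_set_def by blast
        have fy: "f y \<noteq> 0" "y\<in>topspace X" using Z(2) f(2) unfolding cozero_set_def by auto
        define u where "u = (\<lambda>x. if x\<in>topspace X then min 1 (\<bar>f x\<bar> / \<bar>f y\<bar>) else 0)"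
        have "continuous_map X euclideanreal (\<lambda>x. min 1 (\<bar>f x\<bar> / \<bar>f y\<bar>))"
          by (rule continuous_map_real_min[OF cm_const continuous_map_real_divide[OF continuous_map_real_abs[OF f(1)] cm_const]]) (use fy in simp)
        then have uC: "u\<in>CX X" unfolding u_def by (rule CX_restrict)
        have u01: "\<forall>x\<in>topspace X. 0 \<le> u x \<and> u x \<le> 1" unfolding u_def by simp
        have "\<forall>x\<in>topspace X - Z. u x = 0"
          using f(2) unfolding u_def cozero_set_def by auto
        then have "u \<in> S" unfolding S_def using uC u01 Z(1) by blast
        then have "u y \<le> g y" using g(2) fy(2) unfolding pw_le_def by blast
        moreover have "u y = 1" unfolding u_def using fy by simp
        moreover have "g y < 1" using Z(3) V_def by simp
        ultimately show False by simp
      next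
        case False
        obtain u where u: "u\<in>CX X" "\<forall>y\<in>topspace X. 0 \<le> u y \<and> u y \<le> 1" "u x0 = 1" "\<forall>y. y \<notin> V \<longrightarrow> u y = 0"
          using urysohn_CX[OF cr Vo x0V] by blast
        have "\<forall>x\<in>W. u x = 0" using False u(4) unfolding W_def by blast
        then have "u \<in> S" unfolding S_def using u(1,2) by blast
        then have "u x0 \<le> g x0" using g(2) x0(1) unfolding pw_le_def by blast
        then show False using u(3) gx0 by simp
      qed
    qed
  qed
  obtain T where T: "T \<subseteq> S" "countable T" "is_sup_CX X T e"
    using csp SC zS sup unfolding countable_sup_property_CX_def by blast
  define \<Z> where "\<Z> = (\<Union>u\<in>T. {Z\<in>\<U>. \<exists>y\<in>Z. u y \<noteq> 0})"
  have cu: "countable {Z\<in>\<U>. \<exists>y\<in>Z. u y \<noteq> 0}" if uT: "u\<in>T" for u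
  proof -
    have uS: "u\<in>S" using uT T(1) by blast
    show ?thesis
    proof (cases "\<exists>Z0\<in>\<U>. \<forall>x\<in>topspace X - Z0. u x = 0")
      case True
      then obtain Z0 where Z0: "Z0\<in>\<U>" "\<forall>x\<in>topspace X - Z0. u x = 0" by blast
      have "{Z\<in>\<U>. \<exists>y\<in>Z. u y \<noteq> 0} \<subseteq> {Z0}"
      proof
        fix Z assume "Z \<in> {Z\<in>\<U>. \<exists>y\<in>Z. u y \<noteq> 0}"
        then obtain y where Zy: "Z\<in>\<U>" "y\<in>Z" "u y \<noteq> 0" by blast
        have "y \<in> topspace X" using cozero_sub H Zy(1,2) by blast
        then have yZ0: "y \<in> Z0" using Z0(2) Zy(3) by blast
        show "Z \<in> {Z0}"
        proof (rule ccontr)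
          assume "Z \<notin> {Z0}"
          then have "Z \<noteq> Z0" by simp
          then have "disjnt Z Z0" using H Zy(1) Z0(1) unfolding pairwise_def by blast
          then show False using Zy(2) yZ0 unfolding disjnt_def by blast
        qed
      qed
      then show ?thesis by (rule countable_subset) simp
    next
      case False
      then have "\<forall>x\<in>W. u x = 0" using uS unfolding S_def by blast
      then have "{Z\<in>\<U>. \<exists>y\<in>Z. u y \<noteq> 0} = {}" unfolding W_def by blast
      then show ?thesis by (metis countable_empty)
    qed
  qed
  have cZ: "countable \<Z>" unfolding \<Z>_def using T(2) cu by (rule countable_UN)
  have "\<not> \<U> \<subseteq> insert {} \<Z>"
  proof
    assume "\<U> \<subseteq> insert {} \<Z>"
    moreover have "countable (insert {} \<Z>)" using cZ by simp
    ultimately show False using nc countable_subset by blast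
  qed
  then obtain Z1 where Z1: "Z1\<in>\<U>" "Z1 \<noteq> {}" "Z1 \<notin> \<Z>" by blast
  obtain y1 where y1: "y1\<in>Z1" using Z1(2) by blast
  obtain f1 where f1: "continuous_map X euclideanreal f1" "Z1 = cozero_set X f1"
    using H Z1(1) unfolding is_cozero_set_def by blast
  have fy1: "f1 y1 \<noteq> 0" "y1\<in>topspace X" using y1 f1(2) unfolding cozero_set_def by auto
  define h where "h = (\<lambda>x. if x\<in>topspace X then 1 - min 1 \<bar>f1 x\<bar> else 0)"
  have "continuous_map X euclideanreal (\<lambda>x. 1 - min 1 \<bar>f1 x\<bar>)"
    by (rule continuous_map_diff[OF cm_const continuous_map_real_min[OF cm_const continuous_map_real_abs[OF f1(1)]]])
  then have hC: "h \<in> CX X" unfolding h_def by (rule CX_restrict)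
  have "pw_le X u h" if uT: "u\<in>T" for u
    unfolding pw_le_def
  proof
    fix x assume x: "x\<in>topspace X"
    have u01: "0 \<le> u x \<and> u x \<le> 1" using uT T(1) x unfolding S_def by blast
    show "u x \<le> h x"
    proof (cases "x\<in>Z1")
      case True
      have "u x = 0"
      proof (rule ccontr)
        assume "u x \<noteq> 0"
        then have "Z1 \<in> \<Z>" unfolding \<Z>_def using uT Z1(1) True by blast
        then show False using Z1(3) by blast
      qed
      then show ?thesis unfolding h_def using x by simp
    next
      case False
      then have "f1 x = 0" using x f1(2) unfolding cozero_set_def by blast
      then show ?thesis unfolding h_def using x u01 by simp
    qed
  qed
  then have "pw_le X e h" using T(3) hC unfolding is_sup_CX_def by blast
  then have "e y1 \<le> h y1" using fy1(2) unfolding pw_le_def by blast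
  then show False using fy1 unfolding e_def h_def by simp
qed


theorem theorem4p8:
  fixes X :: "'a topology"
  assumes "tychonoff_space X"
  shows "(ccc_space X \<longleftrightarrow> ccc_cozero X)
    \<and> (ccc_cozero X \<longleftrightarrow> countable_sup_property_CX X)
    \<and> ((\<exists>\<phi>. strictly_positive_functional_Cb X \<phi>) \<longrightarrow>
         ccc_space X \<and> ccc_cozero X \<and> countable_sup_property_CX X)"
proof -
  have cr: "completely_regular_space X" using assms unfolding tychonoff_space_def by blast
  have ab: "ccc_space X \<longleftrightarrow> ccc_cozero X"
    using ccc_imp_cozero cozero_imp_ccc[OF cr] by blast
  have bc: "ccc_cozero X \<longleftrightarrow> countable_sup_property_CX X"
    using ab ccc_imp_csp[OF cr] csp_imp_cozero[OF cr] by blast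
  have "(\<exists>\<phi>. strictly_positive_functional_Cb X \<phi>) \<longrightarrow>
         ccc_space X \<and> ccc_cozero X \<and> countable_sup_property_CX X"
    using functional_imp_ccc[OF cr] ab bc by blast
  then show ?thesis using ab bc by blast
qed

end
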